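(* Let $\mathcal W$ be a monotonic game on $[n]$ and $i\neq j$ players. Then the game $\hat{\mathcal W}$ obtained by imposing an asymmetric non-reciprocal strong YES-quarrel of $i$ against $j$ is quasi-monotonic (i.e. 1-monotonic).
   Context: Players are $[n]=\{1,\dots,n\}$. A binary voting game on $[n]$ is identified with its collection $\mathcal W\subseteq 2^{[n]}$ of winning sets ($S\in\mathcal W$ means the division in which exactly the members of $S$ vote YES has outcome YES). It is monotonic if $T\subseteq S$ and $T\in\mathcal W$ imply $S\in\mathcal W$. For an integer $k\ge0$, a game $\mathcal W$ is $k$-monotonic if for every $S\subseteq[n]$ with $S\notin\mathcal W$ and every proper subset $T\subsetneq S$ there exists $K$ with $|K|\le k$ such that $T\setminus K\notin\mathcal W$; quasi-monotonic means 1-monotonic. Asymmetric non-reciprocal strong YES-quarrel of $i$ against $j$: for every $S\subseteq[n]\setminus\{i,j\}$, $S\cup\{i,j\}\in\hat{\mathcal W}\iff S\cup\{j\}\in\mathcal W$; $S\cup\{i\}\in\hat{\mathcal W}\iff S\cup\{i\}\in\mathcal W$; $S\cup\{j\}\in\hat{\mathcal W}\iff S\cup\{j\}\in\mathcal W$; $S\in\hat{\mathcal W}\iff S\in\mathcal W$. *)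

theory Defs
  imports Main
begin

definition is_game :: "nat \<Rightarrow> nat set set \<Rightarrow> bool" where
  "is_game n W \<longleftrightarrow> W \<subseteq> Pow {1..n}"

definition monotonic :: "nat \<Rightarrow> nat set set \<Rightarrow> bool" where
  "monotonic n W \<longleftrightarrow>
     (\<forall>S T. S \<subseteq> {1..n} \<longrightarrow> T \<subseteq> S \<longrightarrow> T \<in> W \<longrightarrow> S \<in> W)"

definition k_monotonic :: "nat \<Rightarrow> nat \<Rightarrow> nat set set \<Rightarrow> bool" where
  "k_monotonic k n W \<longleftrightarrow>
     (\<forall>S T. S \<subseteq> {1..n} \<longrightarrow> S \<notin> W \<longrightarrow> T \<subset> S \<longrightarrow>
        (\<exists>K. K \<subseteq> {1..n} \<and> card K \<le> k \<and> T - K \<notin> W))"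

definition quasi_monotonic :: "nat \<Rightarrow> nat set set \<Rightarrow> bool" where
  "quasi_monotonic n W \<longleftrightarrow> k_monotonic 1 n W"

definition asym_nonrecip_strong_yes_quarrel ::
  "nat \<Rightarrow> nat \<Rightarrow> nat \<Rightarrow> nat set set \<Rightarrow> nat set set \<Rightarrow> bool" where
  "asym_nonrecip_strong_yes_quarrel n i j W W' \<longleftrightarrow>
     (\<forall>S. S \<subseteq> {1..n} - {i, j} \<longrightarrow>
        (S \<union> {i, j} \<in> W' \<longleftrightarrow> S \<union> {j} \<in> W) \<and>
        (S \<union> {i} \<in> W' \<longleftrightarrow> S \<union> {i} \<in> W) \<and>
        (S \<union> {j} \<in> W' \<longleftrightarrow> S \<union> {j} \<in> W) \<and>
        (S \<in> W' \<longleftrightarrow> S \<in> W))"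

end

theory Submission
  imports Defs
begin

theorem theorem11:
  fixes n i j :: nat and W W' :: "nat set set"
  assumes "is_game n W" and "monotonic n W"
    and "i \<in> {1..n}" and "j \<in> {1..n}" and "i \<noteq> j"
    and "is_game n W'"
    and "asym_nonrecip_strong_yes_quarrel n i j W W'"
  shows "quasi_monotonic n W'"
  unfolding quasi_monotonic_def k_monotonic_def
proof (intro allI impI)
  fix S T assume S: "S \<subseteq> {1..n}" and SW: "S \<notin> W'" and TS: "T \<subset> S"
  have mono: "\<And>A B. A \<subseteq> {1..n} \<Longrightarrow> B \<subseteq> A \<Longrightarrow> B \<in> W \<Longrightarrow> A \<in> W"
    using assms(2) unfolding monotonic_def by blast
  have Q: "\<And>X. X \<subseteq> {1..n} - {i, j} \<Longrightarrow>
        (X \<union> {i, j} \<in> W' \<longleftrightarrow> X \<union> {j} \<in> W) \<and>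
        (X \<union> {i} \<in> W' \<longleftrightarrow> X \<union> {i} \<in> W) \<and>
        (X \<union> {j} \<in> W' \<longleftrightarrow> X \<union> {j} \<in> W) \<and>
        (X \<in> W' \<longleftrightarrow> X \<in> W)"
    using assms(7) unfolding asym_nonrecip_strong_yes_quarrel_def by blast
  have S0: "S - {i,j} \<subseteq> {1..n} - {i,j}" using S by auto
  note QS = Q[OF S0]
  have a: "S - {i} \<notin> W"
  proof (cases "j \<in> S")
    case True
    show ?thesis
    proof (cases "i \<in> S")
      case True
      have e: "(S - {i,j}) \<union> {i,j} = S" "(S - {i,j}) \<union> {j} = S - {i}"
        using True \<open>j \<in> S\<close> assms(5) by auto
      have "S \<in> W' \<longleftrightarrow> S - {i} \<in> W" using conjunct1[OF QS] unfolding e .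
      then show ?thesis using SW by simp
    next
      case False
      have e: "(S - {i,j}) \<union> {j} = S" "S - {i} = S" using False \<open>j \<in> S\<close> by auto
      have "S \<in> W' \<longleftrightarrow> S \<in> W" using conjunct1[OF conjunct2[OF conjunct2[OF QS]]] unfolding e .
      then show ?thesis using SW e(2) by simp
    qed
  next
    case False
    show ?thesis
    proof (cases "i \<in> S")
      case True
      have e: "(S - {i,j}) \<union> {i} = S" using True False by auto
      have "S \<in> W' \<longleftrightarrow> S \<in> W" using conjunct1[OF conjunct2[OF QS]] unfolding e .
      then have "S \<notin> W" using SW by simp
      then show ?thesis using mono[OF S, of "S - {i}"] by blast
    next
      case False
      have e: "S - {i,j} = S" "S - {i} = S" using False \<open>j \<notin> S\<close> by auto
      have "S \<in> W' \<longleftrightarrow> S \<in> W" using conjunct2[OF conjunct2[OF conjunct2[OF QS]]] unfolding e .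
      then show ?thesis using SW e(2) by simp
    qed
  qed
  have T0: "T - {i} - {i,j} \<subseteq> {1..n} - {i,j}" using S TS by auto
  note QT = Q[OF T0]
  have b: "T - {i} \<in> W' \<longleftrightarrow> T - {i} \<in> W"
  proof (cases "j \<in> T")
    case True
    have e: "(T - {i} - {i,j}) \<union> {j} = T - {i}" using True assms(5) by auto
    show ?thesis using conjunct1[OF conjunct2[OF conjunct2[OF QT]]] unfolding e .
  next
    case False
    have e: "T - {i} - {i,j} = T - {i}" using False by auto
    show ?thesis using conjunct2[OF conjunct2[OF conjunct2[OF QT]]] unfolding e .
  qed
  have sub: "T - {i} \<subseteq> S - {i}" using TS by auto
  have "S - {i} \<subseteq> {1..n}" using S by auto
  then have "T - {i} \<notin> W" using a mono sub by blast
  then have "T - {i} \<notin> W'" using b by simp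
  moreover have "{i} \<subseteq> {1..n}" using assms(3) by simp
  ultimately show "\<exists>K. K \<subseteq> {1..n} \<and> card K \<le> 1 \<and> T - K \<notin> W'"
    by (intro exI[of _ "{i}"]) simp
qed

end
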